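(* Let $\mu>1$, $\gamma=\mu\gamma^N_1$, and let $(\rho_k)_{k\ge1}$ be an increasing positive sequence with $K_{4/3}<\infty$. There exist constants $A_1<\infty$ and $\delta_0>0$ such that for all $N\ge3$, all $0<\delta<\delta_0$ and all $z\in C_\delta$, $$\big|\widetilde G_N(z)-F_0(z)\big|\le A_1\delta^4,\qquad\text{where } F_0(z)=\tfrac12\sum_{k=0}^{N-1}\lambda_{k,N}|z_k|^2.$$
   Context: Indices modulo $N$; $F_{\gamma,N}(x)=\sum_{i=0}^{N-1}(\tfrac14x_i^4-\tfrac12x_i^2)+\tfrac\gamma4\sum_{i=0}^{N-1}(x_i-x_{i+1})^2$; $\gamma^N_1=\frac1{2\sin^2(\pi/N)}$; $G_N=N^{-1}F_{\gamma,N}$; $\lambda_{k,N}=-1+2\gamma\sin^2(k\pi/N)$. $\omega=e^{2\pi i/N}$; $\widehat{\mathbb{R}}^N=\{z\in\mathbb{C}^N:z_k=\overline{z_{N-k}}\}$; $x_j(Nz)=\sum_{k=0}^{N-1}\omega^{jk}z_k$; $\widetilde G_N(z)=G_N(x(Nz))$, which equals $\tfrac12\sum_k\lambda_{k,N}|z_k|^2+\frac1{4N}\|x(Nz)\|_4^4$. Given increasing positive $(\rho_k)_{k\ge1}$: $r_{0,N}=1$, $r_{k,N}=r_{N-k,N}=\rho_k$ ($1\le k\le\lfloor N/2\rfloor$), $K_p=(\sum_{k\ge1}\rho_k^p/k^p)^{1/p}$, $C_\delta=\{z\in\widehat{\mathbb{R}}^N:|z_k|\le\delta r_{k,N}/\sqrt{|\lambda_{k,N}|},\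 0\le k\le N-1\}$. *)

theory Defs
  imports "HOL-Analysis.Analysis"
begin

text \<open>Vectors in R^N / C^N are functions on nat, only indices 0..N-1 matter; indices mod N.\<close>

definition Fgam :: "real \<Rightarrow> nat \<Rightarrow> (nat \<Rightarrow> real) \<Rightarrow> real" where
  "Fgam \<gamma> N x = (\<Sum>i<N. x i ^ 4 / 4 - x i ^ 2 / 2)
                  + \<gamma> / 4 * (\<Sum>i<N. (x i - x ((i + 1) mod N)) ^ 2)"

definition gamma1 :: "nat \<Rightarrow> real" where
  "gamma1 N = 1 / (2 * (sin (pi / real N)) ^ 2)"

definition GN :: "real \<Rightarrow> nat \<Rightarrow> (nat \<Rightarrow> real) \<Rightarrow> real" where
  "GN \<gamma> N x = Fgam \<gamma> N x / real N"

definition lam :: "real \<Rightarrow> nat \<Rightarrow> nat \<Rightarrow> real" where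
  "lam \<gamma> N k = -1 + 2 * \<gamma> * (sin (real k * pi / real N)) ^ 2"

definition omega :: "nat \<Rightarrow> complex" where
  "omega N = cis (2 * pi / real N)"

text \<open>x_j(Nz) = sum_k omega^(jk) z_k; real for z in hatR N, so we take the real part.\<close>
definition xvec :: "nat \<Rightarrow> (nat \<Rightarrow> complex) \<Rightarrow> nat \<Rightarrow> real" where
  "xvec N z j = Re (\<Sum>k<N. omega N ^ (j * k) * z k)"

definition Gtilde :: "real \<Rightarrow> nat \<Rightarrow> (nat \<Rightarrow> complex) \<Rightarrow> real" where
  "Gtilde \<gamma> N z = GN \<gamma> N (xvec N z)"

definition hatR :: "nat \<Rightarrow> (nat \<Rightarrow> complex) set" where
  "hatR N = {z. \<forall>k<N. z k = cnj (z ((N - k) mod N))}"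

definition rr :: "(nat \<Rightarrow> real) \<Rightarrow> nat \<Rightarrow> nat \<Rightarrow> real" where
  "rr \<rho> N k = (if k = 0 then 1 else if k \<le> N div 2 then \<rho> k else \<rho> (N - k))"

definition Kp :: "(nat \<Rightarrow> real) \<Rightarrow> real \<Rightarrow> real" where
  "Kp \<rho> p = (\<Sum>k. (\<rho> (Suc k) / real (Suc k)) powr p) powr (1 / p)"

definition Cdelta :: "real \<Rightarrow> (nat \<Rightarrow> real) \<Rightarrow> nat \<Rightarrow> real \<Rightarrow> (nat \<Rightarrow> complex) set" where
  "Cdelta \<gamma> \<rho> N \<delta> = {z \<in> hatR N. \<forall>k<N. cmod (z k) \<le> \<delta> * rr \<rho> N k / sqrt \<bar>lam \<gamma> N k\<bar>}"

definition F0 :: "real \<Rightarrow> nat \<Rightarrow> (nat \<Rightarrow> complex) \<Rightarrow> real" where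
  "F0 \<gamma> N z = (1/2) * (\<Sum>k<N. lam \<gamma> N k * (cmod (z k)) ^ 2)"

end

theory Submission imports Defs begin

lemma om_pow_N: "N > 0 \<Longrightarrow> omega N ^ N = 1"
proof -
  assume N: "N > 0"
  have "omega N ^ N = cis (real N * (2*pi/real N))" by (simp add: omega_def Complex.DeMoivre)
  also have "\<dots> = 1" using N by simp
  finally show ?thesis .
qed

lemma om_pow_mod: "N > 0 \<Longrightarrow> omega N ^ n = omega N ^ (n mod N)"
proof -
  assume N: "N > 0"
  have "omega N ^ n = omega N ^ (n div N * N + n mod N)" by simp
  also have "\<dots> = (omega N ^ N) ^ (n div N) * omega N ^ (n mod N)"
    by (metis power_add power_mult mult.commute)
  finally show ?thesis using om_pow_N[OF N] by simp
qed

lemma om_norm[simp]: "cmod (omega N ^ n) = 1"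
  by (simp add: omega_def norm_power)

lemma om_dvd: "N > 0 \<Longrightarrow> N dvd n \<Longrightarrow> omega N ^ n = 1"
  using om_pow_mod[of N n] by simp

lemma om_ne1: "N > 0 \<Longrightarrow> \<not> N dvd n \<Longrightarrow> omega N ^ n \<noteq> 1"
proof
  assume N: "N > 0" and nd: "\<not> N dvd n" and e: "omega N ^ n = 1"
  have "cis (real n * (2 * pi / real N)) = 1" using e by (simp add: omega_def Complex.DeMoivre)
  then have "cos (real n * (2 * pi / real N)) = 1" by (metis cis.sel(1) complex.sel(1) one_complex.sel(1))
  then obtain m :: int where m: "real n * (2 * pi / real N) = real_of_int m * 2 * pi" using cos_one_2pi_int by blast
  then have "real n = m * real N" using N by (simp add: field_simps)
  then have "int n = m * int N" by (metis of_int_eq_iff of_int_mult of_int_of_nat_eq)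
  then have "int N dvd int n" by simp
  then show False using nd by simp
qed

lemma om_sum: "N > 0 \<Longrightarrow> (\<Sum>j<N. omega N ^ (j*n)) = (if N dvd n then of_nat N else 0)"
proof (cases "N dvd n")
  case True
  assume N: "N > 0"
  have "\<And>j. omega N ^ (j*n) = 1" using om_dvd[OF N] True by (simp add: dvd_mult)
  then show ?thesis using True by simp
next
  case False
  assume N: "N > 0"
  have "(\<Sum>j<N. omega N ^ (j*n)) = (\<Sum>j<N. (omega N ^ n) ^ j)"
    by (simp add: power_mult[symmetric] mult.commute)
  also have "\<dots> = 0"
  proof -
    have "(omega N ^ n)^N = 1" by (metis om_pow_N[OF N] power_mult mult.commute power_one)
    then show ?thesis using om_ne1[OF N False] by (simp add: sum_gp_strict)
  qed
  finally show ?thesis using False by simp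
qed

lemma om_cnj: "N > 0 \<Longrightarrow> l \<le> N \<Longrightarrow> cnj (omega N ^ (j*l)) = omega N ^ (j*(N-l))"
proof -
  assume N: "N > 0" and l: "l \<le> N"
  have p: "omega N ^ (j*l) * omega N ^ (j*(N-l)) = 1"
    using om_dvd[OF N, of "j*l + j*(N-l)"] l by (simp add: power_add[symmetric] diff_mult_distrib2)
  have "omega N ^ (j*l) * cnj (omega N ^ (j*l)) = complex_of_real ((cmod (omega N ^ (j*l)))^2)"
    by (simp only: complex_norm_square)
  then have c: "cnj (omega N ^ (j*l)) * omega N ^ (j*l) = 1" by (simp add: mult.commute)
  have "cnj (omega N ^ (j*l)) = cnj (omega N ^ (j*l)) * (omega N ^ (j*l) * omega N ^ (j*(N-l)))"
    using p by simp
  also have "\<dots> = (cnj (omega N ^ (j*l)) * omega N ^ (j*l)) * omega N ^ (j*(N-l))"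
    by (simp only: mult.assoc)
  also have "\<dots> = omega N ^ (j*(N-l))" using c by simp
  finally show ?thesis .
qed

lemma dvd_range: "0 < (m::nat) \<Longrightarrow> m < 2*N \<Longrightarrow> N dvd m \<Longrightarrow> m = N"
proof -
  assume a: "0 < m" "m < 2*N" "N dvd m"
  then obtain q where q: "m = N*q" by (auto simp: dvd_def)
  then have "q < 2" using a by (metis mult.commute mult_less_cancel2)
  moreover have "q \<noteq> 0" using a q by auto
  ultimately have "q = 1" by linarith
  then show ?thesis using q by simp
qed

lemma swap3: "(\<Sum>j\<in>A. \<Sum>k\<in>B. \<Sum>l\<in>C. f j k l) = (\<Sum>k\<in>B. \<Sum>l\<in>C. \<Sum>j\<in>A. f j k l)"
proof -
  have "(\<Sum>j\<in>A. \<Sum>k\<in>B. \<Sum>l\<in>C. f j k l) = (\<Sum>k\<in>B. \<Sum>j\<in>A. \<Sum>l\<in>C. f j k l)" by (rule sum.swap)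
  also have "\<dots> = (\<Sum>k\<in>B. \<Sum>l\<in>C. \<Sum>j\<in>A. f j k l)" by (intro sum.cong refl sum.swap)
  finally show ?thesis .
qed

lemma parseval: "N > 0 \<Longrightarrow> (\<Sum>j<N. (cmod (\<Sum>k<N. omega N ^ (j*k) * w k))^2) = real N * (\<Sum>k<N. (cmod (w k))^2)"
proof -
  assume N: "N > 0"
  have key: "\<And>k l. k < N \<Longrightarrow> l < N \<Longrightarrow> (N dvd (k + (N - l))) = (k = l)"
  proof -
    fix k l assume kl: "k < N" "l < N"
    show "(N dvd (k + (N - l))) = (k = l)"
    proof
      assume "N dvd (k + (N - l))"
      then have "k + (N - l) = N" using dvd_range[of "k + (N-l)" N] kl by linarith
      then show "k = l" using kl by linarith
    qed (use kl in simp)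
  qed
  have key2: "\<And>k l. k < N \<Longrightarrow> l < N \<Longrightarrow> (N dvd (k + N - l)) = (k = l)"
    using key by (metis Nat.add_diff_assoc less_imp_le)
  have "complex_of_real (\<Sum>j<N. (cmod (\<Sum>k<N. omega N ^ (j*k) * w k))^2)
     = (\<Sum>j<N. (\<Sum>k<N. omega N ^ (j*k) * w k) * cnj (\<Sum>l<N. omega N ^ (j*l) * w l))"
    by (simp only: of_real_sum complex_norm_square)
  also have "\<dots> = (\<Sum>j<N. \<Sum>k<N. \<Sum>l<N. (omega N ^ (j*k) * w k) * (cnj (omega N ^ (j*l)) * cnj (w l)))"
    by (simp only: cnj_sum sum_product complex_cnj_mult)
  also have "\<dots> = (\<Sum>j<N. \<Sum>k<N. \<Sum>l<N. w k * cnj (w l) * omega N ^ (j*(k + (N-l))))"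
  proof (intro sum.cong refl)
    fix j k l assume "l \<in> {..<N}"
    then have "cnj (omega N ^ (j*l)) = omega N ^ (j*(N-l))" using om_cnj[OF N] by simp
    then have e: "omega N ^ (j*k) * cnj (omega N ^ (j*l)) = omega N ^ (j*(k + (N-l)))"
      by (simp add: power_add distrib_left)
    have "omega N ^ (j*k) * w k * (cnj (omega N ^ (j*l)) * cnj (w l)) = w k * cnj (w l) * (omega N ^ (j*k) * cnj (omega N ^ (j*l)))"
      by (simp only: mult_ac)
    then show "omega N ^ (j*k) * w k * (cnj (omega N ^ (j*l)) * cnj (w l)) = w k * cnj (w l) * omega N ^ (j*(k + (N-l)))"
      by (simp only: e)
  qed
  also have "\<dots> = (\<Sum>k<N. \<Sum>l<N. w k * cnj (w l) * (\<Sum>j<N. omega N ^ (j*(k + (N-l)))))"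
    unfolding sum_distrib_left by (rule swap3)
  also have "\<dots> = (\<Sum>k<N. \<Sum>l<N. if l = k then w k * cnj (w k) * of_nat N else 0)"
    by (intro sum.cong refl) (auto simp: om_sum[OF N] key key2)
  also have "\<dots> = (\<Sum>k<N. w k * cnj (w k) * of_nat N)"
    by simp
  also have "\<dots> = (\<Sum>k<N. complex_of_real ((cmod (w k))^2) * of_nat N)"
    by (simp only: complex_norm_square)
  also have "\<dots> = complex_of_real (real N * (\<Sum>k<N. (cmod (w k))^2))"
    by (simp add: sum_distrib_left mult.commute)
  finally show ?thesis using of_real_eq_iff by blast
qed


lemma reflect_sum: "(N::nat) > 0 \<Longrightarrow> (\<Sum>k<N. f ((N-k) mod N)) = (\<Sum>k<N. f k)"
proof -
  assume N: "N > 0"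
  have inv: "\<And>k. k < N \<Longrightarrow> (N - (N - k) mod N) mod N = k"
  proof -
    fix k assume k: "k < N"
    show "(N - (N - k) mod N) mod N = k"
    proof (cases "k = 0")
      case True then show ?thesis using N by simp
    next
      case False then have "(N - k) mod N = N - k" using k by simp
      then show ?thesis using k by simp
    qed
  qed
  show ?thesis
    by (rule sum.reindex_bij_witness[where i="\<lambda>k. (N-k) mod N" and j="\<lambda>k. (N-k) mod N"])
       (auto simp: inv N)
qed

lemma conv_sum: "k < (N::nat) \<Longrightarrow> (\<Sum>m<N. f ((m+N-k) mod N)) = (\<Sum>l<N. f l)"
proof -
  assume k: "k < N"
  have i1: "\<And>m. m < N \<Longrightarrow> ((m+N-k) mod N + k) mod N = m"
  proof -
    fix m assume m: "m < N"
    have "((m+N-k) mod N + k) mod N = ((m+N-k) + k) mod N" by (rule mod_add_left_eq)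
    also have "(m+N-k) + k = m + N" using k by simp
    finally show "((m+N-k) mod N + k) mod N = m" using m by simp
  qed
  have i2: "\<And>l. l < N \<Longrightarrow> ((l+k) mod N + N - k) mod N = l"
  proof -
    fix l assume l: "l < N"
    have "(l+k) mod N + N - k = (l+k) mod N + (N - k)" using k by simp
    then have "((l+k) mod N + N - k) mod N = ((l+k) + (N-k)) mod N" by (metis mod_add_left_eq)
    also have "(l+k) + (N-k) = l + N" using k by simp
    finally show "((l+k) mod N + N - k) mod N = l" using l by simp
  qed
  show ?thesis
    by (rule sum.reindex_bij_witness[where i="\<lambda>l. (l+k) mod N" and j="\<lambda>m. (m+N-k) mod N"])
       (use k i1 i2 in auto)
qed

lemma s_real: "N > 0 \<Longrightarrow> z \<in> hatR N \<Longrightarrow> cnj (\<Sum>k<N. omega N ^ (j*k) * z k) = (\<Sum>k<N. omega N ^ (j*k) * z k)"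
proof -
  assume N: "N > 0" and z: "z \<in> hatR N"
  have "cnj (\<Sum>k<N. omega N ^ (j*k) * z k) = (\<Sum>k<N. cnj (omega N ^ (j*k)) * cnj (z k))"
    by (simp only: cnj_sum complex_cnj_mult)
  also have "\<dots> = (\<Sum>k<N. omega N ^ (j*((N-k) mod N)) * z ((N-k) mod N))"
  proof (intro sum.cong refl)
    fix k assume k: "k \<in> {..<N}"
    have "cnj (omega N ^ (j*k)) = omega N ^ (j*(N-k))" using om_cnj[OF N] k by simp
    also have "\<dots> = omega N ^ (j*((N-k) mod N))"
      by (metis N om_pow_mod mod_mult_right_eq)
    finally have 1: "cnj (omega N ^ (j*k)) = omega N ^ (j*((N-k) mod N))" .
    have "z k = cnj (z ((N-k) mod N))" using z k unfolding hatR_def by blast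
    then have 2: "cnj (z k) = z ((N-k) mod N)" by simp
    show "cnj (omega N ^ (j*k)) * cnj (z k) = omega N ^ (j*((N-k) mod N)) * z ((N-k) mod N)"
      using 1 2 by simp
  qed
  also have "\<dots> = (\<Sum>k<N. omega N ^ (j*k) * z k)"
    using reflect_sum[OF N, of "\<lambda>m. omega N ^ (j*m) * z m"] by simp
  finally show ?thesis .
qed

lemma Im_s: "N > 0 \<Longrightarrow> z \<in> hatR N \<Longrightarrow> Im (\<Sum>k<N. omega N ^ (j*k) * z k) = 0"
proof -
  assume a: "N > 0" "z \<in> hatR N"
  define s where "s = (\<Sum>k<N. omega N ^ (j*k) * z k)"
  have "cnj s = s" using s_real[OF a, of j] by (simp only: s_def)
  then have "Im (cnj s) = Im s" by simp
  then have "- Im s = Im s" by (simp only: cnj.sel)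
  then have "Im s = 0" by linarith
  then show ?thesis unfolding s_def .
qed

lemma xvec_sq: "N > 0 \<Longrightarrow> z \<in> hatR N \<Longrightarrow> (xvec N z j)^2 = (cmod (\<Sum>k<N. omega N ^ (j*k) * z k))^2"
  using Im_s[of N z j] by (simp add: xvec_def cmod_power2)

lemma om_shift: "N > 0 \<Longrightarrow> omega N ^ (((j+1) mod N) * k) = omega N ^ (j*k) * omega N ^ k"
proof -
  assume N: "N > 0"
  have "omega N ^ (((j+1) mod N) * k) = omega N ^ ((j+1)*k)"
    using om_pow_mod[OF N, of "((j+1) mod N)*k"] om_pow_mod[OF N, of "(j+1)*k"] by (simp add: mod_mult_left_eq)
  then show ?thesis by (simp add: power_add algebra_simps)
qed

lemma xvec_diff: "N > 0 \<Longrightarrow> z \<in> hatR N \<Longrightarrow>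
   (xvec N z j - xvec N z ((j+1) mod N))^2 = (cmod (\<Sum>k<N. omega N ^ (j*k) * ((1 - omega N ^ k) * z k)))^2"
proof -
  assume N: "N > 0" and z: "z \<in> hatR N"
  let ?s = "\<lambda>j. (\<Sum>k<N. omega N ^ (j*k) * z k)"
  have e: "?s j - ?s ((j+1) mod N) = (\<Sum>k<N. omega N ^ (j*k) * ((1 - omega N ^ k) * z k))"
    unfolding sum_subtractf[symmetric]
  proof (intro sum.cong refl)
    fix k
    have "omega N ^ (((j+1) mod N) * k) = omega N ^ (j*k) * omega N ^ k" by (rule om_shift[OF N])
    then show "omega N ^ (j * k) * z k - omega N ^ ((j + 1) mod N * k) * z k =
          omega N ^ (j * k) * ((1 - omega N ^ k) * z k)" by (simp add: algebra_simps)
  qed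
  define D where "D = ?s j - ?s ((j+1) mod N)"
  have ImD: "Im D = 0" unfolding D_def minus_complex.sel using Im_s[OF N z, of j] Im_s[OF N z, of "(j+1) mod N"] by linarith
  have xD: "xvec N z j - xvec N z ((j+1) mod N) = Re D"
    unfolding D_def minus_complex.sel xvec_def by (rule refl)
  have "(cmod D)^2 = (Re D)^2" by (simp only: cmod_power2 ImD) simp
  then show ?thesis using e by (simp only: xD D_def)
qed

lemma one_minus_om: "N > 0 \<Longrightarrow> (cmod (1 - omega N ^ k))^2 = 4 * (sin (real k * pi / real N))^2"
proof -
  assume N: "N > 0"
  define t where "t = real k * pi / real N"
  have "real k * (2*pi/real N) = 2*t" by (simp add: t_def)
  then have "omega N ^ k = cis (2*t)" by (simp only: omega_def Complex.DeMoivre)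
  then have "(cmod (1 - omega N ^ k))^2 = (1 - cos (2*t))^2 + (sin (2*t))^2"
    by (simp add: cmod_power2)
  also have "\<dots> = 2 - 2 * cos (2*t)"
    using sin_cos_squared_add[of "2*t"] by (simp add: power2_eq_square algebra_simps)
  also have "\<dots> = 4 * (sin t)^2" by (simp add: cos_double_sin)
  finally show ?thesis by (simp add: t_def)
qed

definition dconv :: "nat \<Rightarrow> (nat \<Rightarrow> complex) \<Rightarrow> nat \<Rightarrow> complex" where
  "dconv N z m = (\<Sum>k<N. z k * z ((m+N-k) mod N))"

lemma om_conv: "N > 0 \<Longrightarrow> k < N \<Longrightarrow> omega N ^ (j*k) * omega N ^ (j*((m+N-k) mod N)) = omega N ^ (j*m)"
proof -
  assume N: "N > 0" and k: "k < N"
  have "(j*k + j*((m+N-k) mod N)) mod N = (j*k + j*(m+N-k)) mod N" by (metis mod_add_right_eq mod_mult_right_eq)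
  also have "j*k + j*(m+N-k) = j*m + j*N"
  proof -
    have h: "(m+N-k) + k = m + N" using k by simp
    have "j*k + j*(m+N-k) = j*((m+N-k)+k)" by (simp only: distrib_left add.commute)
    also have "\<dots> = j*(m+N)" by (simp only: h)
    also have "\<dots> = j*m + j*N" by (simp only: distrib_left)
    finally show ?thesis .
  qed
  also have "(j*m + j*N) mod N = (j*m) mod N" by simp
  finally have "(j*k + j*((m+N-k) mod N)) mod N = (j*m) mod N" .
  then show ?thesis
    by (metis N om_pow_mod power_add)
qed

lemma s_square: "N > 0 \<Longrightarrow> (\<Sum>k<N. omega N ^ (j*k) * z k)^2 = (\<Sum>m<N. omega N ^ (j*m) * dconv N z m)"
proof -
  assume N: "N > 0"
  have "(\<Sum>k<N. omega N ^ (j*k) * z k)^2 = (\<Sum>k<N. \<Sum>l<N. (omega N ^ (j*k) * z k) * (omega N ^ (j*l) * z l))"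
    by (simp add: power2_eq_square sum_product)
  also have "\<dots> = (\<Sum>k<N. \<Sum>m<N. (omega N ^ (j*k) * z k) * (omega N ^ (j*((m+N-k) mod N)) * z ((m+N-k) mod N)))"
  proof (rule sum.cong[OF refl])
    fix k assume "k \<in> {..<N}"
    then show "(\<Sum>l<N. (omega N ^ (j*k) * z k) * (omega N ^ (j*l) * z l)) = (\<Sum>m<N. (omega N ^ (j*k) * z k) * (omega N ^ (j*((m+N-k) mod N)) * z ((m+N-k) mod N)))"
      using conv_sum[of k N "\<lambda>l. (omega N ^ (j*k) * z k) * (omega N ^ (j*l) * z l)"] by simp
  qed
  also have "\<dots> = (\<Sum>k<N. \<Sum>m<N. omega N ^ (j*m) * (z k * z ((m+N-k) mod N)))"
  proof (intro sum.cong refl)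
    fix k m assume k: "k \<in> {..<N}"
    have "omega N ^ (j*k) * omega N ^ (j*((m+N-k) mod N)) = omega N ^ (j*m)" using om_conv[OF N] k by simp
    then have e: "omega N ^ (j*k) * omega N ^ (j*((m+N-k) mod N)) = omega N ^ (j*m)" .
    have "(omega N ^ (j*k) * z k) * (omega N ^ (j*((m+N-k) mod N)) * z ((m+N-k) mod N)) = (omega N ^ (j*k) * omega N ^ (j*((m+N-k) mod N))) * (z k * z ((m+N-k) mod N))"
      by (simp only: mult_ac)
    then show "(omega N ^ (j*k) * z k) * (omega N ^ (j*((m+N-k) mod N)) * z ((m+N-k) mod N)) = omega N ^ (j*m) * (z k * z ((m+N-k) mod N))"
      by (simp only: e)
  qed
  also have "\<dots> = (\<Sum>m<N. omega N ^ (j*m) * dconv N z m)"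
    unfolding dconv_def sum_distrib_left by (rule sum.swap)
  finally show ?thesis .
qed

lemma quartic: "N > 0 \<Longrightarrow> z \<in> hatR N \<Longrightarrow> (\<Sum>j<N. (xvec N z j)^4) = real N * (\<Sum>m<N. (cmod (dconv N z m))^2)"
proof -
  assume N: "N > 0" and z: "z \<in> hatR N"
  have "(\<Sum>j<N. (xvec N z j)^4) = (\<Sum>j<N. (cmod (\<Sum>m<N. omega N ^ (j*m) * dconv N z m))^2)"
  proof (intro sum.cong refl)
    fix j
    have "(xvec N z j)^4 = ((xvec N z j)^2)^2" by simp
    also have "\<dots> = (cmod ((\<Sum>k<N. omega N ^ (j*k) * z k)^2))^2"
      by (simp add: xvec_sq[OF N z] norm_power)
    finally show "(xvec N z j)^4 = (cmod (\<Sum>m<N. omega N ^ (j*m) * dconv N z m))^2"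
      by (simp add: s_square[OF N])
  qed
  also have "\<dots> = real N * (\<Sum>m<N. (cmod (dconv N z m))^2)" by (rule parseval[OF N])
  finally show ?thesis .
qed

lemma Gtilde_eq: "N > 0 \<Longrightarrow> z \<in> hatR N \<Longrightarrow>
   Gtilde \<gamma> N z - F0 \<gamma> N z = (1/4) * (\<Sum>m<N. (cmod (dconv N z m))^2)"
proof -
  assume N: "N > 0" and z: "z \<in> hatR N"
  have q1: "(\<Sum>i<N. (xvec N z i)^2) = real N * (\<Sum>k<N. (cmod (z k))^2)"
    using parseval[OF N, of z] by (simp add: xvec_sq[OF N z])
  have q2: "(\<Sum>i<N. (xvec N z i - xvec N z ((i+1) mod N))^2) = real N * (\<Sum>k<N. 4 * (sin (real k * pi / real N))^2 * (cmod (z k))^2)"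
  proof -
    have q2a: "(\<Sum>i<N. (xvec N z i - xvec N z ((i+1) mod N))^2) = (\<Sum>i<N. (cmod (\<Sum>k<N. omega N ^ (i*k) * ((1 - omega N ^ k) * z k)))^2)"
      by (rule sum.cong[OF refl], rule xvec_diff[OF N z])
    show ?thesis using q2a parseval[OF N, of "\<lambda>k. (1 - omega N ^ k) * z k"]
      by (simp add: norm_mult power_mult_distrib one_minus_om[OF N] mult.assoc)
  qed
  have "Gtilde \<gamma> N z = ((\<Sum>i<N. (xvec N z i)^4)/4 - (\<Sum>i<N. (xvec N z i)^2)/2
       + \<gamma>/4 * (\<Sum>i<N. (xvec N z i - xvec N z ((i+1) mod N))^2)) / real N"
    by (simp add: Gtilde_def GN_def Fgam_def sum_subtractf sum_divide_distrib)
  also have "\<dots> = ((real N * (\<Sum>m<N. (cmod (dconv N z m))^2))/4 - (real N * (\<Sum>k<N. (cmod (z k))^2))/2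
       + \<gamma>/4 * (real N * (\<Sum>k<N. 4 * (sin (real k * pi / real N))^2 * (cmod (z k))^2))) / real N"
    by (simp only: quartic[OF N z] q1 q2)
  also have "\<dots> = (\<Sum>m<N. (cmod (dconv N z m))^2)/4 - (\<Sum>k<N. (cmod (z k))^2)/2
       + \<gamma>/4 * (\<Sum>k<N. 4 * (sin (real k * pi / real N))^2 * (cmod (z k))^2)"
    using N by (simp add: field_simps)
  also have "\<dots> = (1/4) * (\<Sum>m<N. (cmod (dconv N z m))^2) + F0 \<gamma> N z"
  proof -
    have "(\<Sum>k<N. lam \<gamma> N k * (cmod (z k))^2) = (\<Sum>k<N. - ((cmod (z k))^2) + \<gamma>/2 * (4 * (sin (real k * pi / real N))^2 * (cmod (z k))^2))"
      by (rule sum.cong[OF refl]) (simp add: lam_def algebra_simps)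
    also have "\<dots> = - (\<Sum>k<N. (cmod (z k))^2) + \<gamma>/2 * (\<Sum>k<N. 4 * (sin (real k * pi / real N))^2 * (cmod (z k))^2)"
      by (simp only: sum.distrib sum_negf sum_distrib_left)
    finally have "F0 \<gamma> N z = (1/2) * (- (\<Sum>k<N. (cmod (z k))^2) + \<gamma>/2 * (\<Sum>k<N. 4 * (sin (real k * pi / real N))^2 * (cmod (z k))^2))"
      by (simp only: F0_def)
    then show ?thesis by (simp add: algebra_simps)
  qed
  finally show ?thesis by simp
qed


lemma flip_inv:
  assumes k: "k < (N::nat)"
  shows "(m+N-(m+N-k) mod N) mod N = k"
proof -
  have N: "0 < N" using k by simp
  have a: "(m+N-k) mod N \<le> m+N" using mod_less_eq_dividend[of "m+N-k" N] by linarith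
  have b: "int ((m+N-k) mod N) = (int m + int N - int k) mod int N"
    using k by (simp add: zmod_int of_nat_diff)
  have "int ((m+N-(m+N-k) mod N) mod N) = (int m + int N - int ((m+N-k) mod N)) mod int N"
    using a by (simp add: zmod_int of_nat_diff)
  also have "\<dots> = (int m + int N - (int m + int N - int k)) mod int N"
    by (simp only: b mod_diff_right_eq)
  also have "\<dots> = int k" using k by simp
  finally show ?thesis by linarith
qed

lemma flip_sum: "(\<Sum>k<N. f ((m+N-k) mod N)) = (\<Sum>k<(N::nat). f k)"
  by (rule sum.reindex_bij_witness[where i="\<lambda>k. (m+N-k) mod N" and j="\<lambda>k. (m+N-k) mod N"])
     (auto simp: flip_inv)

lemma young:
  fixes t :: "nat \<Rightarrow> real"
  assumes t: "\<And>k. 0 \<le> t k"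
  shows "(\<Sum>m<N. (\<Sum>k<N. t k^3 * t ((m+N-k) mod N)^3)^2) \<le> (\<Sum>k<N. t k^4)^3"
proof -
  define S where "S = (\<Sum>k<N. t k^4)"
  have S0: "0 \<le> S" unfolding S_def by (intro sum_nonneg) (simp add: t)
  have rot: "\<And>m. (\<Sum>k<N. t ((m+N-k) mod N)^4) = S"
    unfolding S_def by (rule flip_sum)
  have pm: "(\<Sum>k<N. t k^3 * t ((m+N-k) mod N)^3)^2 \<le> S * (\<Sum>k<N. t k^4 * t ((m+N-k) mod N)^4)" for m
  proof -
    define p where "p k = t k * t ((m+N-k) mod N)" for k
    have p0: "\<And>k. 0 \<le> p k" unfolding p_def using t by simp
    have "(\<Sum>k<N. t k^3 * t ((m+N-k) mod N)^3)^2 = (\<Sum>k<N. (p k)^2 * p k)^2"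
      by (simp add: p_def power_mult_distrib power2_eq_square power3_eq_cube mult_ac)
    also have "\<dots> \<le> (\<Sum>k<N. ((p k)^2)^2) * (\<Sum>k<N. (p k)^2)"
      by (rule Cauchy_Schwarz_ineq_sum)
    also have "\<dots> \<le> (\<Sum>k<N. t k^4 * t ((m+N-k) mod N)^4) * S"
    proof (rule mult_mono)
      show "(\<Sum>k<N. ((p k)^2)^2) \<le> (\<Sum>k<N. t k^4 * t ((m+N-k) mod N)^4)"
        by (simp add: p_def power_mult_distrib flip: power_mult)
      have "(\<Sum>k<N. (p k)^2)^2 = (\<Sum>k<N. (t k)^2 * (t ((m+N-k) mod N))^2)^2"
        by (simp add: p_def power_mult_distrib)
      also have "\<dots> \<le> (\<Sum>k<N. ((t k)^2)^2) * (\<Sum>k<N. ((t ((m+N-k) mod N))^2)^2)"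
        by (rule Cauchy_Schwarz_ineq_sum)
      also have "\<dots> = S * S" using rot[of m] by (simp add: S_def flip: power_mult)
      finally have "(\<Sum>k<N. (p k)^2)^2 \<le> S^2" by (simp add: power2_eq_square)
      then show "(\<Sum>k<N. (p k)^2) \<le> S" using S0 power2_le_imp_le by blast
      show "0 \<le> (\<Sum>k<N. t k^4 * t ((m+N-k) mod N)^4)" by (intro sum_nonneg) (simp add: t)
      show "0 \<le> (\<Sum>k<N. (p k)^2)" by (intro sum_nonneg) simp
    qed
    finally show ?thesis by (simp add: mult_ac)
  qed
  have "(\<Sum>m<N. (\<Sum>k<N. t k^3 * t ((m+N-k) mod N)^3)^2) \<le> (\<Sum>m<N. S * (\<Sum>k<N. t k^4 * t ((m+N-k) mod N)^4))"
    by (rule sum_mono) (rule pm)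
  also have "\<dots> = S * (\<Sum>k<N. t k^4 * (\<Sum>m<N. t ((m+N-k) mod N)^4))"
    unfolding sum_distrib_left by (rule sum.swap)
  also have "\<dots> = S * (\<Sum>k<N. t k^4 * S)"
  proof -
    have c: "\<And>k. k < N \<Longrightarrow> (\<Sum>m<N. t ((m+N-k) mod N)^4) = S"
      unfolding S_def by (rule conv_sum)
    have "(\<Sum>k<N. t k^4 * (\<Sum>m<N. t ((m+N-k) mod N)^4)) = (\<Sum>k<N. t k^4 * S)"
      by (rule sum.cong[OF refl]) (simp add: c)
    then show ?thesis by simp
  qed
  also have "\<dots> = S^3"
  proof -
    have "(\<Sum>k<N. t k^4 * S) = S * S" by (simp only: sum_distrib_right[symmetric] S_def)
    then show ?thesis by (simp add: power3_eq_cube)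
  qed
  finally show ?thesis by (simp add: S_def)
qed


lemma sin_lower: "0 \<le> x \<Longrightarrow> x \<le> 2 \<Longrightarrow> x/3 \<le> sin (x::real)"
proof -
  assume x: "0 \<le> x" "x \<le> 2"
  have "\<bar>sin x - (\<Sum>m<3. sin_coeff m * x ^ m)\<bar> \<le> inverse (fact 3) * \<bar>x\<bar> ^ 3"
    by (rule Maclaurin_sin_bound)
  moreover have "(\<Sum>m<3. sin_coeff m * x ^ m) = x"
    by (simp add: numeral_3_eq_3 sin_coeff_Suc cos_coeff_Suc)
  moreover have "inverse (fact 3) * \<bar>x\<bar> ^ 3 = x^3/6"
  proof -
    have "(fact 3 :: real) = 6" by (simp add: fact_numeral)
    moreover have "\<bar>x\<bar> ^ 3 = x^3" using x by simp
    ultimately show ?thesis by simp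
  qed
  ultimately have "\<bar>sin x - x\<bar> \<le> x^3/6" by simp
  moreover have "x^3/6 \<le> 2*x/3"
  proof -
    have "x*x \<le> 2*2" using x by (intro mult_mono) auto
    then have "x^2 \<le> 4" by (simp add: power2_eq_square)
    then have "x*x^2 \<le> x*4" using x by (intro mult_left_mono) auto
    then show ?thesis by (simp add: power3_eq_cube power2_eq_square)
  qed
  ultimately show ?thesis by linarith
qed

lemma lam_lower:
  assumes mu: "\<mu> > 1" and N: "2 \<le> N" and k1: "1 \<le> k" and k2: "2*k \<le> N"
  shows "(\<mu>-1)*(real k)^2/9 \<le> lam (\<mu>*gamma1 N) N k"
proof -
  define x where "x = pi / real N"
  define y where "y = real k * pi / real N"
  have xpos: "0 < x" using N by (simp add: x_def)
  have yx: "y = real k * x" by (simp add: x_def y_def)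
  have xy: "x \<le> y" using k1 xpos yx by (simp add: mult_le_cancel_right1)
  have ypi: "y \<le> pi/2"
  proof -
    have "real (2*k) \<le> real N" using k2 by linarith
    then have "2 * real k * pi \<le> real N * pi" by (intro mult_right_mono) auto
    then show ?thesis using N by (simp add: y_def field_simps)
  qed
  have s1pos: "0 < sin x" using xpos xy ypi by (intro sin_gt_zero) auto
  have s1le: "sin x \<le> x" using xpos by (intro sin_x_le_x) simp
  have sky: "sin x \<le> sin y" using xpos xy ypi by (intro sin_monotone_2pi_le) auto
  have skl: "y/3 \<le> sin y" using xpos xy ypi pi_less_4 by (intro sin_lower) auto
  define R where "R = (sin y)^2 / (sin x)^2"
  have lam: "lam (\<mu>*gamma1 N) N k = \<mu> * R - 1"
    by (simp add: lam_def gamma1_def R_def y_def x_def)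
  have R1: "1 \<le> R" unfolding R_def using s1pos sky by (simp add: power_mono)
  have R2: "(real k)^2/9 \<le> R"
  proof -
    have "(y/3)^2 \<le> (sin y)^2" using skl xpos xy by (intro power_mono) auto
    moreover have "(sin x)^2 \<le> x^2" using s1le s1pos by (intro power_mono) auto
    ultimately have "(y/3)^2 / x^2 \<le> (sin y)^2 / (sin x)^2"
      using s1pos xpos by (intro frac_le) auto
    moreover have "(y/3)^2 / x^2 = (real k)^2/9" using xpos yx by (simp add: field_simps power2_eq_square)
    ultimately show ?thesis by (simp add: R_def)
  qed
  have "(\<mu>-1)*((real k)^2/9) \<le> (\<mu>-1)*R" using mu R2 by (intro mult_left_mono) auto
  moreover have "(\<mu>-1)*(real k)^2/9 = (\<mu>-1)*((real k)^2/9)" by simp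
  moreover have "(\<mu>-1)*R = \<mu>*R - R" by (simp add: algebra_simps)
  ultimately show ?thesis using lam R1 by linarith
qed

lemma lam_sym: "k < N \<Longrightarrow> lam g N (N-k) = lam g N k"
proof -
  assume k: "k < N"
  have "real (N-k) * pi / real N = pi - real k * pi / real N" using k by (simp add: field_simps of_nat_diff)
  then show ?thesis by (simp add: lam_def)
qed

lemma lam0: "lam g N 0 = -1" by (simp add: lam_def)

lemma term_bound:
  assumes mu: "\<mu> > 1" and N: "2 \<le> N" and k1: "1 \<le> k" and k2: "2*k \<le> N" and r: "0 \<le> r"
  shows "(r / sqrt \<bar>lam (\<mu>*gamma1 N) N k\<bar>) powr (4/3) \<le> (3/sqrt(\<mu>-1)) powr (4/3) * (r / real k) powr (4/3)"
proof -
  have L: "(\<mu>-1)*(real k)^2/9 \<le> \<bar>lam (\<mu>*gamma1 N) N k\<bar>" using lam_lower[OF mu N k1 k2] by linarith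
  have pos: "0 < sqrt (\<mu>-1) * real k / 3" using mu k1 by auto
  have "sqrt ((\<mu>-1)*(real k)^2/9) = sqrt (\<mu>-1) * real k / 3"
    using mu by (simp add: real_sqrt_mult real_sqrt_divide)
  then have sq: "sqrt (\<mu>-1) * real k / 3 \<le> sqrt \<bar>lam (\<mu>*gamma1 N) N k\<bar>"
    using L real_sqrt_le_mono by metis
  have "r / sqrt \<bar>lam (\<mu>*gamma1 N) N k\<bar> \<le> r / (sqrt (\<mu>-1) * real k / 3)"
  proof -
    have lp: "0 < sqrt \<bar>lam (\<mu>*gamma1 N) N k\<bar>" using pos sq by linarith
    show ?thesis by (rule divide_left_mono[OF sq r mult_pos_pos[OF lp pos]])
  qed
  also have "\<dots> = (3/sqrt(\<mu>-1)) * (r / real k)" by (simp add: field_simps)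
  finally have "(r / sqrt \<bar>lam (\<mu>*gamma1 N) N k\<bar>) powr (4/3) \<le> ((3/sqrt(\<mu>-1)) * (r / real k)) powr (4/3)"
    using r by (intro powr_mono2) auto
  then show ?thesis by (simp only: powr_mult)
qed


lemma bsum:
  assumes mu: "\<mu> > 1" and N: "2 \<le> N" and rpos: "\<And>k. k \<ge> 1 \<Longrightarrow> \<rho> k > 0"
    and sm: "summable (\<lambda>k. (\<rho> (Suc k) / real (Suc k)) powr (4/3))"
  shows "(\<Sum>k<N. (rr \<rho> N k / sqrt \<bar>lam (\<mu>*gamma1 N) N k\<bar>) powr (4/3))
      \<le> 1 + 2 * (3/sqrt(\<mu>-1)) powr (4/3) * (\<Sum>k. (\<rho> (Suc k) / real (Suc k)) powr (4/3))"
proof -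
  define C where "C = (3/sqrt(\<mu>-1)) powr (4/3)"
  define f where "f k = (\<rho> (Suc k) / real (Suc k)) powr (4/3)" for k
  define g where "g k = (\<rho> k / real k) powr (4/3)" for k
  define b where "b k = (rr \<rho> N k / sqrt \<bar>lam (\<mu>*gamma1 N) N k\<bar>) powr (4/3)" for k
  have C0: "0 \<le> C" by (simp add: C_def)
  have f0: "\<And>k. 0 \<le> f k" by (simp add: f_def)
  have g0: "\<And>k. 0 \<le> g k" by (simp add: g_def)
  obtain n where n: "N = Suc n" using N by (cases N) auto
  have b0: "b 0 = 1" by (simp add: b_def rr_def lam0)
  have bi: "b (Suc i) \<le> C * (f i + f (n - Suc i))" if i: "i < n" for i
  proof -
    define k where "k = Suc i"
    have kN: "k < N" using i n k_def by simp
    have gk: "g k = f i" by (simp add: g_def f_def k_def)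
    have gNk: "g (N - k) = f (n - Suc i)" using i n k_def by (simp add: g_def f_def Suc_diff_Suc)
    have "b k \<le> C * (g k + g (N - k))"
    proof (cases "2*k \<le> N")
      case True
      then have rk: "rr \<rho> N k = \<rho> k" by (simp add: rr_def k_def) linarith
      have a1: "1 \<le> k" by (simp add: k_def)
      have a3: "0 \<le> \<rho> k" using rpos[OF a1] by simp
      have "b k \<le> C * g k"
        using term_bound[OF mu N a1 True a3] rk by (simp only: b_def C_def g_def)
      moreover have "C * g k \<le> C * (g k + g (N-k))" using C0 g0[of "N-k"] by (intro mult_left_mono) auto
      ultimately show ?thesis by linarith
    next
      case False
      then have rk: "rr \<rho> N k = \<rho> (N - k)" by (simp add: rr_def k_def) linarith
      have lk: "lam (\<mu>*gamma1 N) N k = lam (\<mu>*gamma1 N) N (N-k)" using lam_sym[OF kN] by simp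
      have a1: "1 \<le> N-k" using kN by simp
      have a2: "2*(N-k) \<le> N" using False by simp
      have a3: "0 \<le> \<rho> (N-k)" using rpos[OF a1] by simp
      have "b k \<le> C * g (N-k)"
        using term_bound[OF mu N a1 a2 a3] rk lk by (simp only: b_def C_def g_def)
      moreover have "C * g (N-k) \<le> C * (g k + g (N-k))" using C0 g0[of k] by (intro mult_left_mono) auto
      ultimately show ?thesis by linarith
    qed
    then show ?thesis using gk gNk k_def by simp
  qed
  have "(\<Sum>k<N. b k) = b 0 + (\<Sum>i<n. b (Suc i))" unfolding n by (rule sum.lessThan_Suc_shift)
  also have "\<dots> \<le> 1 + (\<Sum>i<n. C * (f i + f (n - Suc i)))" using b0 bi sum_mono[of "{..<n}" "\<lambda>i. b (Suc i)" "\<lambda>i. C * (f i + f (n - Suc i))"] by simp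
  also have "\<dots> = 1 + C * ((\<Sum>i<n. f i) + (\<Sum>i<n. f (n - Suc i)))"
    by (simp only: sum.distrib sum_distrib_left distrib_left)
  also have "\<dots> = 1 + 2 * C * (\<Sum>i<n. f i)" by (simp add: sum.nat_diff_reindex)
  also have "\<dots> \<le> 1 + 2 * C * (\<Sum>k. f k)"
  proof -
    have "(\<Sum>i<n. f i) \<le> (\<Sum>k. f k)" using sm f0 by (intro sum_le_suminf) (auto simp: f_def)
    then show ?thesis using C0 by (simp add: mult_left_mono)
  qed
  finally show ?thesis by (simp add: b_def C_def f_def)
qed

lemma cube_root: "0 \<le> (a::real) \<Longrightarrow> (a powr (1/3))^3 = a"
proof (cases "a = 0")
  case False
  assume "0 \<le> a" then have a: "0 < a" using False by simp
  have "(a powr (1/3))^3 = (a powr (1/3)) powr (real 3)" using a by (simp add: powr_realpow)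
  also have "\<dots> = a" using a by (simp add: powr_powr)
  finally show ?thesis .
qed simp

lemma four_root: "0 \<le> (a::real) \<Longrightarrow> (a powr (1/3))^4 = a powr (4/3)"
proof (cases "a = 0")
  case False
  assume "0 \<le> a" then have a: "0 < a" using False by simp
  have "(a powr (1/3))^4 = (a powr (1/3)) powr (real 4)" using a by (simp add: powr_realpow)
  also have "\<dots> = a powr (4/3)" using a by (simp add: powr_powr)
  finally show ?thesis .
qed simp

lemma delta4: "0 < (d::real) \<Longrightarrow> (d powr (4/3))^3 = d^4"
proof -
  assume d: "0 < d"
  have "(d powr (4/3))^3 = (d powr (4/3)) powr (real 3)" using d by (simp add: powr_realpow)
  also have "\<dots> = d powr (real 4)" by (simp add: powr_powr)
  also have "\<dots> = d^4" using d by (simp add: powr_realpow)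
  finally show ?thesis .
qed

theorem lemma4p5:
  fixes \<mu> :: real and \<rho> :: "nat \<Rightarrow> real"
  assumes "\<mu> > 1"
    and "\<And>k. k \<ge> 1 \<Longrightarrow> \<rho> k > 0"
    and "\<And>k l. 1 \<le> k \<Longrightarrow> k \<le> l \<Longrightarrow> \<rho> k \<le> \<rho> l"
    and "summable (\<lambda>k. (\<rho> (Suc k) / real (Suc k)) powr (4/3))"
  shows "\<exists>A1 \<delta>0. \<delta>0 > 0 \<and> (\<forall>N \<ge> 3. \<forall>\<delta>. 0 < \<delta> \<and> \<delta> < \<delta>0 \<longrightarrow>
           (\<forall>z \<in> Cdelta (\<mu> * gamma1 N) \<rho> N \<delta>.
              \<bar>Gtilde (\<mu> * gamma1 N) N z - F0 (\<mu> * gamma1 N) N z\<bar> \<le> A1 * \<delta> ^ 4))"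
proof -
  note mu = assms(1) and rpos = assms(2) and sm = assms(4)
  define B0 where "B0 = 1 + 2 * (3/sqrt(\<mu>-1)) powr (4/3) * (\<Sum>k. (\<rho> (Suc k) / real (Suc k)) powr (4/3))"
  have B00: "0 \<le> B0"
  proof -
    have "0 \<le> (\<Sum>k. (\<rho> (Suc k) / real (Suc k)) powr (4/3))" using sm by (intro suminf_nonneg) auto
    then show ?thesis unfolding B0_def by simp
  qed
  have main: "\<bar>Gtilde (\<mu> * gamma1 N) N z - F0 (\<mu> * gamma1 N) N z\<bar> \<le> B0^3/4 * \<delta>^4"
    if N: "N \<ge> 3" and d: "0 < \<delta>" and z: "z \<in> Cdelta (\<mu> * gamma1 N) \<rho> N \<delta>" for N \<delta> z
  proof -
    let ?g = "\<mu> * gamma1 N"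
    have N0: "N > 0" using N by simp
    have zh: "z \<in> hatR N" using z by (simp add: Cdelta_def)
    define b where "b k = rr \<rho> N k / sqrt \<bar>lam ?g N k\<bar>" for k
    have zb: "\<And>k. k < N \<Longrightarrow> cmod (z k) \<le> \<delta> * b k" using z by (simp add: Cdelta_def b_def)
    have bnn: "0 \<le> b k" if "k < N" for k
    proof -
      have nk: "1 \<le> N - k" using that by simp
      have "0 \<le> rr \<rho> N k" using that rpos[of k] rpos[OF nk] by (auto simp: rr_def)
      then show ?thesis by (simp add: b_def)
    qed
    define t where "t k = cmod (z k) powr (1/3)" for k
    have t0: "\<And>k. 0 \<le> t k" by (simp add: t_def)
    define S where "S = (\<Sum>k<N. t k^4)"
    have dle: "cmod (dconv N z m) \<le> (\<Sum>k<N. t k^3 * t ((m+N-k) mod N)^3)" for m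
    proof -
      have "cmod (dconv N z m) \<le> (\<Sum>k<N. cmod (z k * z ((m+N-k) mod N)))"
        unfolding dconv_def by (rule norm_sum)
      also have "\<dots> = (\<Sum>k<N. t k^3 * t ((m+N-k) mod N)^3)"
        by (simp add: t_def cube_root norm_mult)
      finally show ?thesis .
    qed
    have "\<bar>Gtilde ?g N z - F0 ?g N z\<bar> = (1/4) * (\<Sum>m<N. (cmod (dconv N z m))^2)"
    proof -
      have "0 \<le> (1/4) * (\<Sum>m<N. (cmod (dconv N z m))^2)" by (intro mult_nonneg_nonneg sum_nonneg) auto
      then show ?thesis using Gtilde_eq[OF N0 zh, of ?g] by (simp only: abs_of_nonneg)
    qed
    also have "\<dots> \<le> (1/4) * (\<Sum>m<N. (\<Sum>k<N. t k^3 * t ((m+N-k) mod N)^3)^2)"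
      using dle by (intro mult_left_mono sum_mono power_mono) auto
    also have "\<dots> \<le> (1/4) * S^3" unfolding S_def using young[OF t0] by simp
    also have "\<dots> \<le> (1/4) * (\<delta> powr (4/3) * B0)^3"
    proof -
      have "S = (\<Sum>k<N. cmod (z k) powr (4/3))" by (simp add: S_def t_def four_root)
      also have "\<dots> \<le> (\<Sum>k<N. \<delta> powr (4/3) * b k powr (4/3))"
      proof (rule sum_mono)
        fix k assume "k \<in> {..<N}"
        then have "cmod (z k) powr (4/3) \<le> (\<delta> * b k) powr (4/3)"
          using zb bnn by (intro powr_mono2) auto
        then show "cmod (z k) powr (4/3) \<le> \<delta> powr (4/3) * b k powr (4/3)"
          by (simp add: powr_mult)
      qed
      also have "\<dots> = \<delta> powr (4/3) * (\<Sum>k<N. b k powr (4/3))" by (simp add: sum_distrib_left)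
      also have "\<dots> \<le> \<delta> powr (4/3) * B0"
        using bsum[OF mu _ rpos sm, of N] N by (intro mult_left_mono) (auto simp: b_def B0_def)
      finally have "S \<le> \<delta> powr (4/3) * B0" .
      moreover have "0 \<le> S" unfolding S_def by (intro sum_nonneg) (simp add: t0)
      ultimately show ?thesis by (intro mult_left_mono power_mono) auto
    qed
    also have "\<dots> = B0^3/4 * \<delta>^4" using d by (simp add: power_mult_distrib delta4)
    finally show ?thesis .
  qed
  show ?thesis
    by (rule exI[of _ "B0^3/4"], rule exI[of _ 1]) (use main in auto)
qed

end
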